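(* In the non-stationary non-deterministic bandit described in the context, satisfying the stated assumption with constants $\theta>1$, $\xi>1$, $1/2\le\eta<1$, where $\xi$ is large enough that $\alpha>2$ satisfies $\xi\eta(1-\eta)\le\alpha<\xi(1-\eta)$, run the UCB algorithm of the context and let $$\hat\rho^{\mathrm{stream}}_n=\frac1\beta\ln\Big(\frac1n\sum_{i=1}^K\sum_{s'\in\mathcal{S}}\sum_{t=1}^{T^{s'}_i(T_i(n))}\exp\big(\beta(c_i+\gamma x^{s'}_{i,t})\big)\Big).$$ Then 1. there exist constants $\theta''>1$, $\xi''>1$, $1/2\le\eta''<1$ such that for every $n\in\mathbb{N}$ and $z\ge1$, $$\mathbb{P}[n\hat\rho^{\mathrm{stream}}_n-n\mu^*\ge n^{\eta''}z]\le\frac{\theta''}{z^{\xi''}},\qquad \mathbb{P}[n\hat\rho^{\mathrm{stream}}_n-n\mu^*\le -n^{\eta''}z]\le\frac{\theta''}{z^{\xi''}},$$ where $\eta''=\frac{\alpha}{\xi(1-\eta)}$, $\xi''=\alpha-1$, and $\theta''$ depends on $R,K,\Delta_{\min},\beta,\theta,\xi,\alpha,\eta$ (and on $\theta^L$); 2. $|\mu^*-\mathbb{E}[\hat\rho^{\mathrm{stream}}_n]|=O\big(\theta''n^{\frac{\alpha}{\xi(1-\eta)}-1}\big)$, in particular $\lim_{n\to\infty}\mathbb{E}[\hat\rho^{\mathrm{stream}}_n]=\mu^*$.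
   Context: Non-deterministic bandit with $K$ arms and finite state set $\mathcal{S}$, $\beta>0$, $\gamma\in(0,1]$. Selecting arm $i$ yields a deterministic cost $c_i\in[-R_c,R_c]$ and a next state $s'$ drawn independently each time from a distribution $P^i$ on $\mathcal{S}$; for each $i,s'$ there is a sequence of (possibly non-stationary) random costs $(x^{s'}_{i,t})_{t\ge1}$ in $[-R_x,R_x]$, the $t$-th cost obtained after state $s'$ follows arm $i$. $R=R_c+R_x$. Let $\hat\rho^{s'}_{i,n}=\frac1{\beta\gamma}\ln(\frac1n\sum_{t=1}^n e^{\beta\gamma x^{s'}_{i,t}})$, $\mu^{s'}_{i,n}=\mathbb{E}[\hat\rho^{s'}_{i,n}]$. Assumption: $\lim_n\mu^{s'}_{i,n}=\mu^{s'}_i$ exists and $\mathbb{P}[n\hat\rho^{s'}_{i,n}-n\mu^{s'}_i\ge n^\eta z]\le\theta/z^\xi$, $\mathbb{P}[n\hat\rho^{s'}_{i,n}-n\mu^{s'}_i\le -n^\eta z]\le\theta/z^\xi$ for all $i,s'$, $z\ge1$, $n\in\mathbb{N}$. With $T^{s'}_i(n)$ the number of times $s'$ was sampled in the first $n$ selections of arm $i$, $\hat\rho_{i,n}=\frac1\beta\ln\big(\frac1n\sum_{s'}\sum_{t=1}^{T^{s'}_i(n)}\exp(\beta(c_i+\gamma x^{s'}_{i,t}))\big)$, and $\mu_i=\frac1\beta\ln\mathbb{E}_{s'\sim P^i}[\exp(\beta(c_i+\gamma\mu^{s'}_i))]$. Let $\theta^L>1$ be a constant such that $\mathbb{P}[n\hat\rho_{i,n}-n\mu_i\ge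 n^\eta z]\le\theta^L/z^\xi$ and $\mathbb{P}[n\hat\rho_{i,n}-n\mu_i\le -n^\eta z]\le\theta^L/z^\xi$ for all $i$, $z\ge1$, $n$ (such a constant exists). There is a unique arm $i^*$ attaining $\mu^*=\min_i\mu_i$; $\Delta_i=\mu_i-\mu^*$, $\Delta_{\min}=\min_{i\ne i^*}\Delta_i$. Algorithm (with $\alpha>0$): select each arm once, then at timestep $t$ select $a_t=\arg\min_i\{\hat\rho_{i,T_i(t-1)}-b_{t,T_i(t-1)}\}$ with $b_{t,s}=(\theta^L)^{1/\xi}t^{\alpha/\xi}/s^{1-\eta}$, where $T_i(n)$ is the number of selections of arm $i$ during timesteps $1,\dots,n$. *)

theory Defs
  imports "HOL-Probability.Probability" "HOL-Library.Landau_Symbols"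
begin

text \<open>Arms are 1..K, states form a finite type 's, the sample space is M.
  Snext i k w : state observed after the k-th selection (k >= 1) of arm i.
  x i s t w   : the t-th cost (t >= 1) obtained after state s follows arm i.
  a t w       : arm selected at timestep t (t >= 1).\<close>

definition state_count :: "(nat \<Rightarrow> nat \<Rightarrow> 'w \<Rightarrow> 's) \<Rightarrow> nat \<Rightarrow> 's \<Rightarrow> nat \<Rightarrow> 'w \<Rightarrow> nat" where
  "state_count Snext i s n w = card {k \<in> {1..n}. Snext i k w = s}"

definition arm_count :: "(nat \<Rightarrow> 'w \<Rightarrow> nat) \<Rightarrow> nat \<Rightarrow> nat \<Rightarrow> 'w \<Rightarrow> nat" where
  "arm_count a i n w = card {t \<in> {1..n}. a t w = i}"

definition rho_hat_state ::
  "real \<Rightarrow> real \<Rightarrow> (nat \<Rightarrow> 's \<Rightarrow> nat \<Rightarrow> 'w \<Rightarrow> real) \<Rightarrow> nat \<Rightarrow> 's \<Rightarrow> nat \<Rightarrow> 'w \<Rightarrow> real" where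
  "rho_hat_state \<beta> \<gamma> x i s n w =
     1 / (\<beta> * \<gamma>) * ln (1 / real n * (\<Sum>t=1..n. exp (\<beta> * \<gamma> * x i s t w)))"

definition rho_hat_arm ::
  "real \<Rightarrow> real \<Rightarrow> (nat \<Rightarrow> real) \<Rightarrow> (nat \<Rightarrow> 's \<Rightarrow> nat \<Rightarrow> 'w \<Rightarrow> real)
   \<Rightarrow> (nat \<Rightarrow> nat \<Rightarrow> 'w \<Rightarrow> 's::finite) \<Rightarrow> nat \<Rightarrow> nat \<Rightarrow> 'w \<Rightarrow> real" where
  "rho_hat_arm \<beta> \<gamma> c x Snext i n w =
     1 / \<beta> * ln (1 / real n * (\<Sum>s\<in>UNIV. \<Sum>t=1..state_count Snext i s n w.
        exp (\<beta> * (c i + \<gamma> * x i s t w))))"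

definition mu_arm :: "real \<Rightarrow> real \<Rightarrow> (nat \<Rightarrow> real) \<Rightarrow> (nat \<Rightarrow> 's::finite pmf)
   \<Rightarrow> (nat \<Rightarrow> 's \<Rightarrow> real) \<Rightarrow> nat \<Rightarrow> real" where
  "mu_arm \<beta> \<gamma> c P mus i =
     1 / \<beta> * ln (\<Sum>s\<in>UNIV. pmf (P i) s * exp (\<beta> * (c i + \<gamma> * mus i s)))"

definition ucb_bonus :: "real \<Rightarrow> real \<Rightarrow> real \<Rightarrow> real \<Rightarrow> nat \<Rightarrow> nat \<Rightarrow> real" where
  "ucb_bonus \<theta>L \<xi> \<alpha> \<eta> t s = \<theta>L powr (1 / \<xi>) * real t powr (\<alpha> / \<xi>) / real s powr (1 - \<eta>)"

text \<open>The UCB rule: arms 1..K selected once at timesteps 1..K; afterwards the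
  selected arm is (some) minimiser of the lower confidence index (any tie-breaking).\<close>
definition ucb_run :: "nat \<Rightarrow> real \<Rightarrow> real \<Rightarrow> (nat \<Rightarrow> real) \<Rightarrow> (nat \<Rightarrow> 's \<Rightarrow> nat \<Rightarrow> 'w \<Rightarrow> real)
   \<Rightarrow> (nat \<Rightarrow> nat \<Rightarrow> 'w \<Rightarrow> 's::finite) \<Rightarrow> real \<Rightarrow> real \<Rightarrow> real \<Rightarrow> real
   \<Rightarrow> 'w set \<Rightarrow> (nat \<Rightarrow> 'w \<Rightarrow> nat) \<Rightarrow> bool" where
  "ucb_run K \<beta> \<gamma> c x Snext \<theta>L \<xi> \<alpha> \<eta> \<Omega> a \<longleftrightarrow>
     (\<forall>w\<in>\<Omega>. \<forall>t\<in>{1..K}. a t w = t) \<and>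
     (\<forall>w\<in>\<Omega>. \<forall>t>K. a t w \<in> {1..K} \<and>
        (\<forall>j\<in>{1..K}.
           rho_hat_arm \<beta> \<gamma> c x Snext (a t w) (arm_count a (a t w) (t - 1) w) w
             - ucb_bonus \<theta>L \<xi> \<alpha> \<eta> t (arm_count a (a t w) (t - 1) w)
           \<le> rho_hat_arm \<beta> \<gamma> c x Snext j (arm_count a j (t - 1) w) w
             - ucb_bonus \<theta>L \<xi> \<alpha> \<eta> t (arm_count a j (t - 1) w)))"

definition rho_stream :: "nat \<Rightarrow> real \<Rightarrow> real \<Rightarrow> (nat \<Rightarrow> real) \<Rightarrow> (nat \<Rightarrow> 's \<Rightarrow> nat \<Rightarrow> 'w \<Rightarrow> real)
   \<Rightarrow> (nat \<Rightarrow> nat \<Rightarrow> 'w \<Rightarrow> 's::finite) \<Rightarrow> (nat \<Rightarrow> 'w \<Rightarrow> nat) \<Rightarrow> nat \<Rightarrow> 'w \<Rightarrow> real" where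
  "rho_stream K \<beta> \<gamma> c x Snext a n w =
     1 / \<beta> * ln (1 / real n * (\<Sum>i=1..K. \<Sum>s\<in>UNIV.
        \<Sum>t=1..state_count Snext i s (arm_count a i n w) w.
          exp (\<beta> * (c i + \<gamma> * x i s t w))))"

end

theory Submission
  imports Defs
begin

lemma card_fiber_sum:
  assumes "finite A" "finite I" "f ` A \<subseteq> I"
  shows "(\<Sum>i\<in>I. card {t\<in>A. f t = i}) = card A"
proof -
  have "card (\<Union>i\<in>I. {t\<in>A. f t = i}) = (\<Sum>i\<in>I. card {t\<in>A. f t = i})"
    using assms by (intro card_UN_disjoint) auto
  moreover have "(\<Union>i\<in>I. {t\<in>A. f t = i}) = A" using assms by auto
  ultimately show ?thesis by simp
qed

lemma card_count_Suc:
  "card {k \<in> {1..Suc n}. P k} = card {k \<in> {1..n}. P k} + (if P (Suc n) then 1 else 0)"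
proof -
  have "{k \<in> {1..Suc n}. P k} = {k \<in> {1..n}. P k} \<union> (if P (Suc n) then {Suc n} else {})"
    by (auto simp: le_Suc_eq)
  then show ?thesis by auto
qed

lemma count_meas:
  fixes n :: nat
  assumes "\<And>k. k \<ge> 1 \<Longrightarrow> {w \<in> space M. P k w} \<in> sets M"
  shows "(\<lambda>w. card {k \<in> {1..n}. P k w}) \<in> M \<rightarrow>\<^sub>M count_space UNIV"
proof (induction n)
  case 0
  show ?case by (simp add: measurable_const)
next
  case (Suc n)
  have "(\<lambda>w. (\<lambda>j w. if P (Suc n) w then j + 1 else j) (card {k \<in> {1..n}. P k w}) w)
      \<in> M \<rightarrow>\<^sub>M count_space UNIV"
  proof (rule measurable_compose_countable'[OF _ Suc])
    fix j :: nat
    show "(\<lambda>w. if P (Suc n) w then j + 1 else j) \<in> M \<rightarrow>\<^sub>M count_space UNIV"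
      by (rule measurable_If[OF measurable_const measurable_const assms]) simp_all
  qed simp
  moreover have "(\<lambda>w. card {k \<in> {1..Suc n}. P k w}) = 
     (\<lambda>w. (\<lambda>j w. if P (Suc n) w then j + 1 else j) (card {k \<in> {1..n}. P k w}) w)"
    by (rule ext) (simp only: card_count_Suc, simp)
  ultimately show ?case by simp
qed

lemma ln_diff_bound:
  fixes p q m :: real
  assumes "0 < m" "m \<le> p" "m \<le> q"
  shows "\<bar>ln p - ln q\<bar> \<le> \<bar>p - q\<bar> / m"
proof -
  have a: "ln p - ln q \<le> \<bar>p - q\<bar> / m" if "0 < m" "m \<le> p" "m \<le> q" for p q
  proof -
    have "ln p - ln q = ln (p / q)" using that by (simp add: ln_div)
    also have "\<dots> \<le> p / q - 1" using that by (intro ln_le_minus_one) auto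
    also have "\<dots> = (p - q) / q" using that by (simp add: field_simps)
    also have "\<dots> \<le> \<bar>p - q\<bar> / q" using that by (intro divide_right_mono) auto
    also have "\<dots> \<le> \<bar>p - q\<bar> / m" using that by (intro divide_left_mono) auto
    finally show ?thesis .
  qed
  show ?thesis using a[of p q] a[of q p] assms by (auto simp: abs_minus_commute)
qed


locale ucbset =
  fixes M :: "'w measure"
    and K :: nat and \<beta> \<gamma> Rc Rx :: real
    and c :: "nat \<Rightarrow> real"
    and P :: "nat \<Rightarrow> 's::finite pmf"
    and Snext :: "nat \<Rightarrow> nat \<Rightarrow> 'w \<Rightarrow> 's"
    and x :: "nat \<Rightarrow> 's \<Rightarrow> nat \<Rightarrow> 'w \<Rightarrow> real"
    and mus :: "nat \<Rightarrow> 's \<Rightarrow> real"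
    and \<theta> \<xi> \<eta> \<alpha> \<theta>L :: real
    and a :: "nat \<Rightarrow> 'w \<Rightarrow> nat"
  assumes M: "prob_space M"
    and K: "K \<ge> 1"
    and \<beta>: "\<beta> > 0" and \<gamma>: "0 < \<gamma>" "\<gamma> \<le> 1"
    and c_bd: "\<And>i. i \<in> {1..K} \<Longrightarrow> \<bar>c i\<bar> \<le> Rc"
    and x_meas: "\<And>i s t. i \<in> {1..K} \<Longrightarrow> x i s t \<in> borel_measurable M"
    and x_bd: "\<And>i s t w. i \<in> {1..K} \<Longrightarrow> t \<ge> 1 \<Longrightarrow> w \<in> space M \<Longrightarrow> \<bar>x i s t w\<bar> \<le> Rx"
    and S_meas: "\<And>i k. i \<in> {1..K} \<Longrightarrow> k \<ge> 1 \<Longrightarrow> Snext i k \<in> measurable M (count_space UNIV)"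
    and \<xi>: "\<xi> > 1" and \<eta>: "1/2 \<le> \<eta>" "\<eta> < 1"
    and \<alpha>: "\<alpha> > 2" "\<xi> * \<eta> * (1 - \<eta>) \<le> \<alpha>" "\<alpha> < \<xi> * (1 - \<eta>)"
    and \<theta>L: "\<theta>L > 1"
    and tail_arm_up: "\<And>i n z. i \<in> {1..K} \<Longrightarrow> n \<ge> 1 \<Longrightarrow> z \<ge> 1 \<Longrightarrow>
          measure M {w \<in> space M. real n * rho_hat_arm \<beta> \<gamma> c x Snext i n w
                                    - real n * mu_arm \<beta> \<gamma> c P mus i
                                    \<ge> real n powr \<eta> * z} \<le> \<theta>L / z powr \<xi>"
    and tail_arm_lo: "\<And>i n z. i \<in> {1..K} \<Longrightarrow> n \<ge> 1 \<Longrightarrow> z \<ge> 1 \<Longrightarrow>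
          measure M {w \<in> space M. real n * rho_hat_arm \<beta> \<gamma> c x Snext i n w
                                    - real n * mu_arm \<beta> \<gamma> c P mus i
                                    \<le> - (real n powr \<eta> * z)} \<le> \<theta>L / z powr \<xi>"
    and unique_opt: "\<exists>!i. i \<in> {1..K} \<and>
                       mu_arm \<beta> \<gamma> c P mus i = Min (mu_arm \<beta> \<gamma> c P mus ` {1..K})"
    and a_meas: "\<And>t. a t \<in> measurable M (count_space UNIV)"
    and run: "ucb_run K \<beta> \<gamma> c x Snext \<theta>L \<xi> \<alpha> \<eta> (space M) a"
begin

definition "R = Rc + Rx"
definition "mu i = mu_arm \<beta> \<gamma> c P mus i"
definition "mustar = Min (mu ` {1..K})"
definition "istar = (THE i. i \<in> {1..K} \<and> mu i = mustar)"
definition "rh i m w = rho_hat_arm \<beta> \<gamma> c x Snext i m w"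
definition "T i n w = arm_count a i n w"
definition "sc i s m w = state_count Snext i s m w"
definition "ee i s t w = exp (\<beta> * (c i + \<gamma> * x i s t w))"
definition "Sarm i m w = (\<Sum>s\<in>UNIV. \<Sum>t=1..sc i s m w. ee i s t w)"
definition "L = exp (2 * \<beta> * R) / \<beta>"
definition "\<eta>q = \<alpha> / (\<xi> * (1 - \<eta>))"
definition "\<Delta> = Min (insert 1 ((\<lambda>i. mu i - mustar) ` ({1..K} - {istar})))"
definition "U0 = (2 * \<theta>L powr (1/\<xi>) / \<Delta>) powr (1 / (1 - \<eta>))"
definition "bb t s = ucb_bonus \<theta>L \<xi> \<alpha> \<eta> t s"

lemma prob: "prob_space M" by (rule M)

lemma istar: "istar \<in> {1..K}" "mu istar = mustar"
proof -
  have "\<exists>!i. i \<in> {1..K} \<and> mu i = mustar" using unique_opt by (simp add: mu_def[abs_def] mustar_def)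
  from theI'[OF this] show "istar \<in> {1..K}" "mu istar = mustar" unfolding istar_def by auto
qed

lemma mu_gt: assumes "i \<in> {1..K}" "i \<noteq> istar" shows "mu i > mustar"
proof -
  have "mu i \<ge> mustar" unfolding mustar_def using assms by (intro Min_le) auto
  moreover have "mu i \<noteq> mustar"
  proof
    assume "mu i = mustar"
    have "\<exists>!i. i \<in> {1..K} \<and> mu i = mustar" using unique_opt by (simp add: mu_def[abs_def] mustar_def)
    then show False using \<open>mu i = mustar\<close> istar assms by auto
  qed
  ultimately show ?thesis by simp
qed

lemma Delta: "\<Delta> > 0" "\<And>i. i \<in> {1..K} \<Longrightarrow> i \<noteq> istar \<Longrightarrow> \<Delta> \<le> mu i - mustar"
proof -
  show "\<Delta> > 0" unfolding \<Delta>_def using mu_gt by (subst Min_gr_iff) auto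
  fix i assume "i \<in> {1..K}" "i \<noteq> istar"
  then show "\<Delta> \<le> mu i - mustar" unfolding \<Delta>_def by (intro Min_le) auto
qed

lemma run1: "\<And>w t. w \<in> space M \<Longrightarrow> t \<in> {1..K} \<Longrightarrow> a t w = t"
  using run unfolding ucb_run_def by blast

lemma run2: "\<And>w t. w \<in> space M \<Longrightarrow> t > K \<Longrightarrow> a t w \<in> {1..K} \<and>
        (\<forall>j\<in>{1..K}.
           rho_hat_arm \<beta> \<gamma> c x Snext (a t w) (arm_count a (a t w) (t - 1) w) w
             - ucb_bonus \<theta>L \<xi> \<alpha> \<eta> t (arm_count a (a t w) (t - 1) w)
           \<le> rho_hat_arm \<beta> \<gamma> c x Snext j (arm_count a j (t - 1) w) w
             - ucb_bonus \<theta>L \<xi> \<alpha> \<eta> t (arm_count a j (t - 1) w))"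
  using run unfolding ucb_run_def by blast

lemma a_range: assumes "w \<in> space M" "t \<ge> 1" shows "a t w \<in> {1..K}"
proof (cases "t \<le> K")
  case True
  then show ?thesis using run1[OF assms(1), of t] assms(2) by simp
next
  case False
  then show ?thesis using run2[OF assms(1), of t] by simp
qed

lemma a_init: assumes "w \<in> space M" "t \<in> {1..K}" shows "a t w = t"
  using run1 assms by blast

lemma a_rule: assumes "w \<in> space M" "t > K" "j \<in> {1..K}"
  shows "rh (a t w) (T (a t w) (t - 1) w) w - bb t (T (a t w) (t - 1) w)
           \<le> rh j (T j (t - 1) w) w - bb t (T j (t - 1) w)"
proof -
  have "\<forall>j\<in>{1..K}.
           rho_hat_arm \<beta> \<gamma> c x Snext (a t w) (arm_count a (a t w) (t - 1) w) w
             - ucb_bonus \<theta>L \<xi> \<alpha> \<eta> t (arm_count a (a t w) (t - 1) w)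
           \<le> rho_hat_arm \<beta> \<gamma> c x Snext j (arm_count a j (t - 1) w) w
             - ucb_bonus \<theta>L \<xi> \<alpha> \<eta> t (arm_count a j (t - 1) w)"
    using run2[OF assms(1,2)] by (rule conjunct2)
  then show ?thesis unfolding rh_def T_def bb_def using assms(3) by (rule bspec)
qed

lemma T_Suc: "T i (Suc n) w = T i n w + (if a (Suc n) w = i then 1 else 0)"
  unfolding T_def arm_count_def by (rule card_count_Suc)

lemma T_le: "T i n w \<le> n"
proof -
  have "T i n w \<le> card {1..n}" unfolding T_def arm_count_def by (intro card_mono) auto
  then show ?thesis by simp
qed

lemma sum_T: assumes "w \<in> space M" shows "(\<Sum>i\<in>{1..K}. T i n w) = n"
  unfolding T_def arm_count_def using a_range[OF assms]
  by (subst card_fiber_sum) auto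

lemma sum_sc: "(\<Sum>s\<in>UNIV. sc i s m w) = m"
  unfolding sc_def state_count_def by (subst card_fiber_sum) auto

lemma sc_mono: "m \<le> m' \<Longrightarrow> sc i s m w \<le> sc i s m' w"
  unfolding sc_def state_count_def by (intro card_mono) auto

lemma T_meas: "(\<lambda>w. T i n w) \<in> M \<rightarrow>\<^sub>M count_space UNIV"
  unfolding T_def arm_count_def
proof (rule count_meas[where P="\<lambda>k w. a k w = i"])
  fix k :: nat
  have "a k \<in> M \<rightarrow>\<^sub>M count_space UNIV" by (rule a_meas)
  then have "a k -` {i} \<inter> space M \<in> sets M" by (rule measurable_sets) simp
  moreover have "{w \<in> space M. a k w = i} = a k -` {i} \<inter> space M" by auto
  ultimately show "{w \<in> space M. a k w = i} \<in> sets M" by simp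
qed

lemma sc_meas: assumes "i \<in> {1..K}" shows "(\<lambda>w. sc i s m w) \<in> M \<rightarrow>\<^sub>M count_space UNIV"
  unfolding sc_def state_count_def
proof (rule count_meas[where P="\<lambda>k w. Snext i k w = s"])
  fix k :: nat assume k: "k \<ge> 1"
  have "Snext i k \<in> M \<rightarrow>\<^sub>M count_space UNIV" by (rule S_meas[OF assms k])
  then have "Snext i k -` {s} \<inter> space M \<in> sets M" by (rule measurable_sets) simp
  moreover have "{w \<in> space M. Snext i k w = s} = Snext i k -` {s} \<inter> space M" by auto
  ultimately show "{w \<in> space M. Snext i k w = s} \<in> sets M" by simp
qed

end


context ucbset begin

lemma ee_meas: assumes "i \<in> {1..K}" shows "(\<lambda>w. ee i s t w) \<in> borel_measurable M"
proof -
  note [measurable] = x_meas[OF assms]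
  show ?thesis unfolding ee_def by measurable
qed

lemma Sarm_meas: assumes "i \<in> {1..K}" shows "(\<lambda>w. Sarm i m w) \<in> borel_measurable M"
  unfolding Sarm_def
proof (rule borel_measurable_sum)
  fix s
  show "(\<lambda>w. \<Sum>t = 1..sc i s m w. ee i s t w) \<in> borel_measurable M"
  proof (rule measurable_compose_countable'[where f="\<lambda>N w. \<Sum>t = 1..N. ee i s t w", OF _ sc_meas[OF assms]])
    fix N :: nat
    show "(\<lambda>w. \<Sum>t = 1..N. ee i s t w) \<in> borel_measurable M"
      by (rule borel_measurable_sum) (rule ee_meas[OF assms])
  qed simp
qed

lemma Sarm_comp_meas: assumes "i \<in> {1..K}" "g \<in> M \<rightarrow>\<^sub>M count_space UNIV"
  shows "(\<lambda>w. Sarm i (g w) w) \<in> borel_measurable M"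
  by (rule measurable_compose_countable'[where f="\<lambda>m w. Sarm i m w", OF Sarm_meas[OF assms(1)] assms(2)]) simp

lemma rh_eq: "rh i m w = 1 / \<beta> * ln (1 / real m * Sarm i m w)"
  unfolding rh_def rho_hat_arm_def Sarm_def sc_def ee_def ..

lemma stream_eq: "rho_stream K \<beta> \<gamma> c x Snext a n w = 1 / \<beta> * ln (1 / real n * (\<Sum>i=1..K. Sarm i (T i n w) w))"
  unfolding rho_stream_def Sarm_def sc_def ee_def T_def ..

lemma rh_meas: assumes "i \<in> {1..K}" shows "(\<lambda>w. rh i m w) \<in> borel_measurable M"
proof -
  note [measurable] = Sarm_meas[OF assms]
  show ?thesis unfolding rh_eq by measurable
qed

lemma stream_meas: "(\<lambda>w. rho_stream K \<beta> \<gamma> c x Snext a n w) \<in> borel_measurable M"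
proof -
  have [measurable]: "(\<lambda>w. \<Sum>i=1..K. Sarm i (T i n w) w) \<in> borel_measurable M"
    by (rule borel_measurable_sum) (rule Sarm_comp_meas[OF _ T_meas])
  show ?thesis unfolding stream_eq by measurable
qed

lemma R_nonneg: "R \<ge> 0"
proof -
  obtain w where w: "w \<in> space M" using prob_space.not_empty[OF M] by auto
  have "\<bar>c 1\<bar> \<le> Rc" using c_bd K by auto
  moreover have "\<bar>x 1 undefined 1 w\<bar> \<le> Rx" using x_bd K w by auto
  ultimately show ?thesis unfolding R_def by linarith
qed

lemma ee_bd: assumes "i \<in> {1..K}" "t \<ge> 1" "w \<in> space M"
  shows "exp (- (\<beta> * R)) \<le> ee i s t w" "ee i s t w \<le> exp (\<beta> * R)"
proof -
  have "\<bar>\<gamma> * x i s t w\<bar> \<le> \<bar>x i s t w\<bar>" using \<gamma> by (simp add: abs_mult mult_left_le_one_le)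
  then have "\<bar>c i + \<gamma> * x i s t w\<bar> \<le> R" using c_bd[OF assms(1)] x_bd[where s=s, OF assms] abs_triangle_ineq[of "c i" "\<gamma> * x i s t w"] unfolding R_def by linarith
  then have "\<bar>\<beta> * (c i + \<gamma> * x i s t w)\<bar> \<le> \<beta> * R" using \<beta> by (simp add: abs_mult)
  then show "exp (- (\<beta> * R)) \<le> ee i s t w" "ee i s t w \<le> exp (\<beta> * R)" unfolding ee_def by auto
qed

lemma inner_bd: assumes "i \<in> {1..K}" "w \<in> space M"
  shows "real N * exp (- (\<beta> * R)) \<le> (\<Sum>t=1..N. ee i s t w)" "(\<Sum>t=1..N. ee i s t w) \<le> real N * exp (\<beta> * R)"
  using sum_bounded_below[of "{1..N}" "exp (- (\<beta> * R))" "\<lambda>t. ee i s t w"]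
        sum_bounded_above[of "{1..N}" "\<lambda>t. ee i s t w" "exp (\<beta> * R)"] ee_bd[OF assms(1) _ assms(2)]
  by auto

lemma Sarm_bd: assumes "i \<in> {1..K}" "w \<in> space M"
  shows "real m * exp (- (\<beta> * R)) \<le> Sarm i m w" "Sarm i m w \<le> real m * exp (\<beta> * R)"
proof -
  have m: "real m = (\<Sum>s\<in>UNIV. real (sc i s m w))" using sum_sc[of i m w] by (metis of_nat_sum)
  show "real m * exp (- (\<beta> * R)) \<le> Sarm i m w" unfolding Sarm_def m sum_distrib_right
    by (intro sum_mono inner_bd[OF assms])
  show "Sarm i m w \<le> real m * exp (\<beta> * R)" unfolding Sarm_def m sum_distrib_right
    by (intro sum_mono inner_bd[OF assms])
qed

end


context ucbset begin

lemma compare: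
  assumes w: "w \<in> space M" and n: "n \<ge> 1"
  shows "\<bar>real n * rho_stream K \<beta> \<gamma> c x Snext a n w - real n * rh istar n w\<bar>
           \<le> L * (real n - real (T istar n w))"
proof -
  define Ts where "Ts = T istar n w"
  define G where "G = (\<Sum>i=1..K. Sarm i (T i n w) w)"
  define H where "H = Sarm istar n w"
  define A where "A = Sarm istar Ts w"
  define B where "B = (\<Sum>i\<in>{1..K}-{istar}. Sarm i (T i n w) w)"
  define C where "C = (\<Sum>s\<in>UNIV. \<Sum>t\<in>{1..sc istar s n w} - {1..sc istar s Ts w}. ee istar s t w)"
  define E where "E = exp (\<beta> * R)"
  define e where "e = exp (- (\<beta> * R))"
  have Epos: "E > 0" "e > 0" unfolding E_def e_def by auto
  have Ee: "E / e = exp (2 * \<beta> * R)" unfolding E_def e_def by (simp add: exp_minus field_simps flip: exp_add)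
  have st: "istar \<in> {1..K}" by (rule istar)
  have Tsn: "Ts \<le> n" unfolding Ts_def by (rule T_le)
  have sumT: "(\<Sum>i\<in>{1..K}. real (T i n w)) = real n" using sum_T[OF w, of n] by (metis of_nat_sum)
  have sumT2: "(\<Sum>i\<in>{1..K}-{istar}. real (T i n w)) = real n - real Ts"
    using sumT st unfolding Ts_def by (simp add: sum.remove)
  have GAB: "G = A + B" unfolding G_def A_def B_def Ts_def using st by (simp add: sum.remove)
  have HAC: "H = A + C"
  proof -
    have "(\<Sum>t=1..sc istar s n w. ee istar s t w) =
          (\<Sum>t\<in>{1..sc istar s n w} - {1..sc istar s Ts w}. ee istar s t w) + (\<Sum>t=1..sc istar s Ts w. ee istar s t w)" for s
      using sc_mono[OF Tsn, of istar s w] by (intro sum.subset_diff) auto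
    then show ?thesis unfolding H_def A_def C_def Sarm_def by (simp add: sum.distrib)
  qed
  have B0: "0 \<le> B" unfolding B_def using Sarm_bd(1)[OF _ w] Epos
    by (intro sum_nonneg) (smt (verit, del_insts) Diff_iff e_def mult_nonneg_nonneg of_nat_0_le_iff)
  have B1: "B \<le> E * (real n - real Ts)"
  proof -
    have "B \<le> (\<Sum>i\<in>{1..K}-{istar}. real (T i n w) * E)" unfolding B_def E_def
      using Sarm_bd(2)[OF _ w] by (intro sum_mono) auto
    also have "\<dots> = E * (real n - real Ts)" using sumT2 by (simp add: sum_distrib_left[symmetric] mult.commute)
    finally show ?thesis .
  qed
  have C0: "0 \<le> C" unfolding C_def ee_def by (intro sum_nonneg) auto
  have C1: "C \<le> E * (real n - real Ts)"
  proof -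
    have "C \<le> (\<Sum>s\<in>UNIV. real (sc istar s n w - sc istar s Ts w) * E)" unfolding C_def
    proof (intro sum_mono)
      fix s
      have cd: "card ({1..sc istar s n w} - {1..sc istar s Ts w}) = sc istar s n w - sc istar s Ts w"
        using sc_mono[OF Tsn, of istar s w] by (subst card_Diff_subset) auto
      show "(\<Sum>t\<in>{1..sc istar s n w} - {1..sc istar s Ts w}. ee istar s t w) \<le> real (sc istar s n w - sc istar s Ts w) * E"
        using sum_bounded_above[of "{1..sc istar s n w} - {1..sc istar s Ts w}" "\<lambda>t. ee istar s t w" E]
          ee_bd(2)[OF st _ w] unfolding cd E_def by auto
    qed
    also have "\<dots> = E * (\<Sum>s\<in>UNIV. real (sc istar s n w) - real (sc istar s Ts w))"
      using sc_mono[OF Tsn, of istar _ w] by (simp add: sum_distrib_left mult.commute of_nat_diff)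
    also have "\<dots> = E * (real n - real Ts)"
      using sum_sc[of istar n w] sum_sc[of istar Ts w] by (simp add: sum_subtractf flip: of_nat_sum)
    finally show ?thesis .
  qed
  have Glow: "real n * e \<le> G"
  proof -
    have "real n * e = (\<Sum>i=1..K. real (T i n w) * e)" using sumT by (simp add: sum_distrib_right[symmetric])
    also have "\<dots> \<le> G" unfolding G_def e_def using Sarm_bd(1)[OF _ w] by (intro sum_mono) auto
    finally show ?thesis .
  qed
  have Hlow: "real n * e \<le> H" unfolding H_def e_def by (rule Sarm_bd(1)[OF st w])
  have npos: "real n * e > 0" using n Epos by auto
  have GH: "\<bar>G - H\<bar> \<le> E * (real n - real Ts)" using GAB HAC B0 B1 C0 C1 by auto
  have lnGH: "\<bar>ln G - ln H\<bar> \<le> E * (real n - real Ts) / (real n * e)"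
    using ln_diff_bound[OF npos Glow Hlow] GH npos by (meson divide_right_mono less_imp_le order_trans)
  have Gpos: "G > 0" "H > 0" using npos Glow Hlow by auto
  have eq: "real n * rho_stream K \<beta> \<gamma> c x Snext a n w - real n * rh istar n w = real n / \<beta> * (ln G - ln H)"
    unfolding stream_eq rh_eq G_def[symmetric] H_def[symmetric] using Gpos n \<beta>
    by (simp add: ln_mult ln_div field_simps)
  have "\<bar>real n / \<beta> * (ln G - ln H)\<bar> = real n / \<beta> * \<bar>ln G - ln H\<bar>" using \<beta> by (simp add: abs_mult)
  also have "\<dots> \<le> real n / \<beta> * (E * (real n - real Ts) / (real n * e))"
    using lnGH \<beta> by (intro mult_left_mono) auto
  also have "\<dots> = (E / e) / \<beta> * (real n - real Ts)" proof -
    have "real n > 0" using n by simp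
    then show ?thesis using Epos \<beta> by (simp add: field_simps)
  qed
  also have "\<dots> = L * (real n - real Ts)" unfolding Ee L_def ..
  finally show ?thesis unfolding eq Ts_def .
qed

end


context ucbset begin

definition "yy u = \<theta>L powr (1/\<xi>) * real u powr (\<alpha>/\<xi>)"
definition "Abad i u = {w \<in> space M. real u * rh i u w - real u * mu i \<le> - (real u powr \<eta> * yy u)}"
definition "Bbad m u = {w \<in> space M. real m * rh istar m w - real m * mu istar \<ge> real m powr \<eta> * yy u}"

lemma crossing:
  assumes "T i n w > u" shows "\<exists>t\<in>{1..n}. a t w = i \<and> T i (t - 1) w = u"
  using assms
proof (induction n)
  case 0
  then show ?case unfolding T_def arm_count_def by simp
next
  case (Suc n)
  show ?case
  proof (cases "T i n w > u")
    case True
    then show ?thesis using Suc.IH by force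
  next
    case False
    then have "a (Suc n) w = i" "T i n w = u" using Suc.prems T_Suc[of i n w] by (auto split: if_splits)
    then show ?thesis by force
  qed
qed

lemma powr_aux: "real u > 0 \<Longrightarrow> real u / real u powr (1 - \<eta>) = real u powr \<eta>"
proof -
  assume u: "real u > 0"
  have "real u powr \<eta> = real u powr (1 - (1 - \<eta>))" by simp
  also have "\<dots> = real u powr 1 / real u powr (1 - \<eta>)" by (rule powr_diff)
  finally show ?thesis using u by simp
qed

lemma yy_ge1: "u \<ge> 1 \<Longrightarrow> yy u \<ge> 1"
  unfolding yy_def using \<theta>L \<xi> \<alpha>
  by (intro mult_ge1_I ge_one_powr_ge_zero) auto

lemma yy_powr: "u \<ge> 1 \<Longrightarrow> yy u powr \<xi> = \<theta>L * real u powr \<alpha>"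
  unfolding yy_def using \<theta>L \<xi> by (simp add: powr_mult powr_powr)

lemma bb_small:
  assumes u: "u \<ge> 1" "real u \<ge> U0 * real n powr \<eta>q" and t: "t \<le> n" and n: "n \<ge> 1"
  shows "2 * bb t u \<le> \<Delta>"
proof -
  have D: "\<Delta> > 0" by (rule Delta)
  define Q where "Q = 2 * \<theta>L powr (1/\<xi>) / \<Delta>"
  have Q: "Q > 0" unfolding Q_def using D \<theta>L by auto
  have e1: "1 - \<eta> > 0" using \<eta> by auto
  have "U0 powr (1 - \<eta>) = Q" unfolding U0_def Q_def[symmetric] using Q e1 by (simp add: powr_powr)
  moreover have "(real n powr \<eta>q) powr (1 - \<eta>) = real n powr (\<alpha>/\<xi>)"
    unfolding \<eta>q_def using e1 \<xi> by (simp add: powr_powr)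
  moreover have "(U0 * real n powr \<eta>q) powr (1 - \<eta>) \<le> real u powr (1 - \<eta>)"
    using u e1 unfolding U0_def by (intro powr_mono2) auto
  ultimately have low: "Q * real n powr (\<alpha>/\<xi>) \<le> real u powr (1 - \<eta>)"
    unfolding U0_def by (simp add: powr_mult)
  have "bb t u \<le> \<theta>L powr (1/\<xi>) * real n powr (\<alpha>/\<xi>) / real u powr (1 - \<eta>)"
    unfolding bb_def ucb_bonus_def using t \<alpha> \<xi> u
    by (intro divide_right_mono mult_left_mono powr_mono2) auto
  also have "\<dots> \<le> \<theta>L powr (1/\<xi>) * real n powr (\<alpha>/\<xi>) / (Q * real n powr (\<alpha>/\<xi>))"
    using low Q u n by (intro divide_left_mono mult_pos_pos) (auto intro!: mult_nonneg_nonneg)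
  also have "\<dots> \<le> \<Delta> / 2"
  proof (cases "n = 0")
    case True then show ?thesis using D by simp
  next
    case False
    then have "real n powr (\<alpha>/\<xi>) > 0" by simp
    then show ?thesis unfolding Q_def using D \<theta>L by (simp add: field_simps)
  qed
  finally show ?thesis by simp
qed

lemma sub_cover:
  assumes i: "i \<in> {1..K}" "i \<noteq> istar" and u: "u \<ge> 1" "real u \<ge> U0 * real n powr \<eta>q"
    and w: "w \<in> space M" and T: "T i n w > u"
  shows "w \<in> Abad i u \<union> (\<Union>m\<in>{1..n}. Bbad m u)"
proof -
  obtain t where t: "t \<in> {1..n}" "a t w = i" "T i (t - 1) w = u" using crossing[OF T] by blast
  have tK: "t > K"
  proof (rule ccontr)
    assume "\<not> t > K"
    then have tk: "t \<in> {1..K}" using t by auto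
    then have "i = t" using a_init[OF w tk] t by simp
    have "{s \<in> {1..t - 1}. a s w = i} = {}"
    proof -
      { fix s assume s: "s \<in> {1..t-1}" "a s w = i"
        then have "s \<in> {1..K}" using tk by auto
        then have "a s w = s" using a_init[OF w] by simp
        then have False using s \<open>i = t\<close> by auto }
      then show ?thesis by blast
    qed
    then have "T i (t - 1) w = 0" unfolding T_def arm_count_def by simp
    then show False using t u by simp
  qed
  have ut: "u < t" using T_le[of i "t - 1" w] t tK by auto
  define m where "m = T istar (t - 1) w"
  have m1: "m \<ge> 1"
  proof -
    have "istar \<in> {s \<in> {1..t - 1}. a s w = istar}" using istar a_init[OF w] tK by auto
    then have "{s \<in> {1..t - 1}. a s w = istar} \<noteq> {}" by blast
    then show ?thesis unfolding m_def T_def arm_count_def by (simp add: Suc_le_eq card_gt_0_iff)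
  qed
  have mn: "m \<le> n" using T_le[of istar "t - 1" w] t unfolding m_def by auto
  have rule: "rh i u w - bb t u \<le> rh istar m w - bb t m"
    using a_rule[OF w tK istar(1)] t unfolding m_def by simp
  have bbsmall: "2 * bb t u \<le> \<Delta>" using bb_small[OF u] t by auto
  have gap: "\<Delta> \<le> mu i - mustar" using Delta(2)[OF i] .
  have tpow: "real t powr (\<alpha>/\<xi>) \<ge> real u powr (\<alpha>/\<xi>)" using ut \<alpha> \<xi> by (intro powr_mono2) auto
  have thL: "\<theta>L powr (1/\<xi>) > 0" using \<theta>L by simp
  show ?thesis
  proof (cases "rh i u w \<le> mu i - bb t u")
    case True
    have "real u * (rh i u w - mu i) \<le> real u * (- bb t u)"
      using True by (intro mult_left_mono) auto
    then have "real u * rh i u w - real u * mu i \<le> - (real u * bb t u)"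
      by (simp add: algebra_simps)
    moreover have "real u * bb t u = \<theta>L powr (1/\<xi>) * real t powr (\<alpha>/\<xi>) * real u powr \<eta>"
    proof -
      have "real u * bb t u = \<theta>L powr (1/\<xi>) * real t powr (\<alpha>/\<xi>) * (real u / real u powr (1 - \<eta>))"
        unfolding bb_def ucb_bonus_def by simp
      also have "real u / real u powr (1 - \<eta>) = real u powr \<eta>" using u by (intro powr_aux) auto
      finally show ?thesis .
    qed
    moreover have "\<theta>L powr (1/\<xi>) * real t powr (\<alpha>/\<xi>) * real u powr \<eta> \<ge> real u powr \<eta> * yy u"
    proof -
      have "real u powr \<eta> * yy u = \<theta>L powr (1/\<xi>) * real u powr (\<alpha>/\<xi>) * real u powr \<eta>"
        unfolding yy_def by (simp only: mult_ac)
      also have "\<dots> \<le> \<theta>L powr (1/\<xi>) * real t powr (\<alpha>/\<xi>) * real u powr \<eta>"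
        using tpow thL by (intro mult_right_mono mult_left_mono) auto
      finally show ?thesis .
    qed
    ultimately have "real u * rh i u w - real u * mu i \<le> - (real u powr \<eta> * yy u)" by linarith
    then have "w \<in> Abad i u" using w by (simp add: Abad_def)
    then show ?thesis by (rule UnI1)
  next
    case False
    then have "rh istar m w \<ge> mustar + bb t m" using rule bbsmall gap by linarith
    then have "real m * (rh istar m w - mu istar) \<ge> real m * bb t m"
      using istar(2) by (intro mult_left_mono) auto
    then have "real m * rh istar m w - real m * mu istar \<ge> real m * bb t m"
      by (simp add: algebra_simps)
    moreover have "real m * bb t m = \<theta>L powr (1/\<xi>) * real t powr (\<alpha>/\<xi>) * real m powr \<eta>"
    proof -
      have "real m * bb t m = \<theta>L powr (1/\<xi>) * real t powr (\<alpha>/\<xi>) * (real m / real m powr (1 - \<eta>))"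
        unfolding bb_def ucb_bonus_def by simp
      also have "real m / real m powr (1 - \<eta>) = real m powr \<eta>" using m1 by (intro powr_aux) auto
      finally show ?thesis .
    qed
    moreover have "\<theta>L powr (1/\<xi>) * real t powr (\<alpha>/\<xi>) * real m powr \<eta> \<ge> real m powr \<eta> * yy u"
    proof -
      have "real m powr \<eta> * yy u = \<theta>L powr (1/\<xi>) * real u powr (\<alpha>/\<xi>) * real m powr \<eta>"
        unfolding yy_def by (simp only: mult_ac)
      also have "\<dots> \<le> \<theta>L powr (1/\<xi>) * real t powr (\<alpha>/\<xi>) * real m powr \<eta>"
        using tpow thL by (intro mult_right_mono mult_left_mono) auto
      finally show ?thesis .
    qed
    ultimately have "real m powr \<eta> * yy u \<le> real m * rh istar m w - real m * mu istar" by linarith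
    then have "w \<in> Bbad m u" using w by (simp add: Bbad_def)
    moreover have "m \<in> {1..n}" using m1 mn by simp
    ultimately show ?thesis by (intro UnI2 UN_I[of m]) auto
  qed
qed

end


context ucbset begin

definition "Sub i u n = Abad i u \<union> (\<Union>m\<in>{1..n}. Bbad m u)"
definition "Z0 = 4 * L * K * (U0 + 1) + 2"
definition "C1 = \<theta>L * 2 powr \<xi> + 2 * K * (4 * L * K) powr \<alpha>"

lemma L_pos: "L > 0" unfolding L_def using \<beta> by simp

lemma U0_nonneg: "U0 \<ge> 0" unfolding U0_def by simp

lemma etaq: "\<eta> \<le> \<eta>q" "\<eta>q < 1" "\<eta>q * \<alpha> \<ge> 1" "\<alpha> - 1 \<le> \<xi>" "\<eta>q > 0"
proof -
  have p: "\<xi> * (1 - \<eta>) > 0" using \<xi> \<eta> by auto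
  show 1: "\<eta> \<le> \<eta>q" unfolding \<eta>q_def using p \<alpha> by (simp add: field_simps mult.commute mult.left_commute)
  show "\<eta>q < 1" unfolding \<eta>q_def using p \<alpha> by (simp add: field_simps)
  show "\<eta>q > 0" using 1 \<eta> by linarith
  have "\<eta>q * \<alpha> \<ge> 1/2 * 2" using 1 \<eta> \<alpha> by (intro mult_mono) auto
  then show "\<eta>q * \<alpha> \<ge> 1" by simp
  have "\<xi> * (1 - \<eta>) \<le> \<xi>" using \<xi> \<eta> by (simp add: mult_left_le_one_le)
  then show "\<alpha> - 1 \<le> \<xi>" using \<alpha> by linarith
qed

lemma Abad_sets: "i \<in> {1..K} \<Longrightarrow> Abad i u \<in> sets M"
proof -
  assume i: "i \<in> {1..K}"
  note [measurable] = rh_meas[OF i]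
  show ?thesis unfolding Abad_def by measurable
qed

lemma Bbad_sets: "Bbad m u \<in> sets M"
proof -
  note [measurable] = rh_meas[OF istar(1)]
  show ?thesis unfolding Bbad_def by measurable
qed

lemma Sub_sets: "i \<in> {1..K} \<Longrightarrow> Sub i u n \<in> sets M"
  unfolding Sub_def using Abad_sets Bbad_sets by auto

lemma Abad_measure: assumes "i \<in> {1..K}" "u \<ge> 1" shows "measure M (Abad i u) \<le> 1 / real u powr \<alpha>"
proof -
  have "measure M (Abad i u) \<le> \<theta>L / yy u powr \<xi>"
    using tail_arm_lo[OF assms yy_ge1[OF assms(2)]] unfolding Abad_def rh_def mu_def .
  also have "\<dots> = 1 / real u powr \<alpha>" using yy_powr[OF assms(2)] \<theta>L by simp
  finally show ?thesis .
qed

lemma Bbad_measure: assumes "m \<ge> 1" "u \<ge> 1" shows "measure M (Bbad m u) \<le> 1 / real u powr \<alpha>"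
proof -
  have "measure M (Bbad m u) \<le> \<theta>L / yy u powr \<xi>"
    using tail_arm_up[OF istar(1) assms(1) yy_ge1[OF assms(2)]] unfolding Bbad_def rh_def mu_def .
  also have "\<dots> = 1 / real u powr \<alpha>" using yy_powr[OF assms(2)] \<theta>L by simp
  finally show ?thesis .
qed

lemma Sub_measure: assumes "i \<in> {1..K}" "u \<ge> 1" "n \<ge> 1"
  shows "measure M (Sub i u n) \<le> 2 * real n / real u powr \<alpha>"
proof -
  interpret prob_space M by (rule M)
  have "measure M (Sub i u n) \<le> measure M (Abad i u) + measure M (\<Union>m\<in>{1..n}. Bbad m u)"
    unfolding Sub_def using Abad_sets[OF assms(1)] Bbad_sets by (intro measure_Un_le) auto
  also have "measure M (\<Union>m\<in>{1..n}. Bbad m u) \<le> (\<Sum>m\<in>{1..n}. measure M (Bbad m u))"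
    using Bbad_sets by (intro measure_UNION_le) auto
  also have "\<dots> \<le> (\<Sum>m\<in>{1..n}. 1 / real u powr \<alpha>)" using Bbad_measure assms by (intro sum_mono) auto
  also have "\<dots> = real n / real u powr \<alpha>" by simp
  finally have "measure M (Sub i u n) \<le> measure M (Abad i u) + real n / real u powr \<alpha>" by simp
  moreover have "measure M (Abad i u) \<le> real n / real u powr \<alpha>"
    using Abad_measure[OF assms(1,2)] assms(3) by (smt (verit) divide_right_mono of_nat_1 of_nat_mono powr_ge_zero)
  ultimately show ?thesis by simp
qed

lemma sub_incl: assumes "i \<in> {1..K}" "i \<noteq> istar" "u \<ge> 1" "real u \<ge> U0 * real n powr \<eta>q"
  shows "{w \<in> space M. T i n w > u} \<subseteq> Sub i u n"
  unfolding Sub_def using sub_cover[OF assms] by blast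

end


context ucbset begin

lemma h_facts: assumes "n \<ge> 1" shows "real n powr \<eta>q \<ge> 1" "real n powr \<eta> \<le> real n powr \<eta>q"
  "(real n powr \<eta>q) powr \<alpha> \<ge> real n"
proof -
  show "real n powr \<eta>q \<ge> 1" using assms etaq by (intro ge_one_powr_ge_zero) auto
  show "real n powr \<eta> \<le> real n powr \<eta>q" using assms etaq by (intro powr_mono) auto
  have "(real n powr \<eta>q) powr \<alpha> = real n powr (\<eta>q * \<alpha>)" by (simp add: powr_powr)
  also have "\<dots> \<ge> real n powr 1" using assms etaq by (intro powr_mono) auto
  finally show "(real n powr \<eta>q) powr \<alpha> \<ge> real n" using assms by simp
qed

lemma Z0_facts: "Z0 \<ge> 2" "Z0 \<ge> 4 * L * K * (U0 + 1)"
  unfolding Z0_def using L_pos U0_nonneg K by auto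

lemma u_choice:
  assumes n: "n \<ge> 1" and z: "z \<ge> Z0"
  defines "h \<equiv> real n powr \<eta>q"
  defines "u \<equiv> nat \<lfloor>h * z / (2 * L * K)\<rfloor>"
  shows "u \<ge> 1" "real u \<ge> U0 * h" "real u \<ge> h * z / (4 * L * K)" "L * K * real u \<le> h * z / 2"
proof -
  have h1: "h \<ge> 1" unfolding h_def using h_facts[OF n] by simp
  have LK: "L * K > 0" "L * K \<ge> 0" using L_pos K by auto
  define q where "q = h * z / (2 * L * K)"
  have z1: "z / (4 * L * K) \<ge> U0 + 1" using z Z0_facts LK by (simp add: field_simps)
  have "q = 2 * h * (z / (4 * L * K))" unfolding q_def using L_pos K by (simp add: field_simps)
  also have "\<dots> \<ge> 2 * h * (U0 + 1)" using z1 h1 by (intro mult_left_mono) auto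
  finally have q1: "q \<ge> 2 * h * (U0 + 1)" .
  have q2: "q \<ge> 2" using q1 h1 U0_nonneg
    by (smt (verit, best) mult_le_cancel_left1 mult_right_mono)
  have uq: "real u \<le> q" "real u \<ge> q - 1" unfolding u_def q_def[symmetric] using q2 by linarith+
  show "u \<ge> 1" using uq q2 by linarith
  have "real u \<ge> q / 2" using uq q2 by linarith
  moreover have "q / 2 = h * z / (4 * L * K)" unfolding q_def using L_pos K by (simp add: field_simps)
  ultimately show u3: "real u \<ge> h * z / (4 * L * K)" by simp
  have "h * z / (4 * L * K) = h * (z / (4 * L * K))" by simp
  also have "\<dots> \<ge> h * (U0 + 1)" using z1 h1 by (intro mult_left_mono) auto
  finally show "real u \<ge> U0 * h" using u3 h1 by (smt (verit) mult.commute mult_left_mono)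
  have "L * K * real u \<le> L * K * q" using uq LK by (intro mult_left_mono) auto
  also have "\<dots> = h * z / 2" unfolding q_def using L_pos K by (simp add: field_simps)
  finally show "L * K * real u \<le> h * z / 2" .
qed

lemma others_sum: assumes "w \<in> space M"
  shows "real n - real (T istar n w) = (\<Sum>i\<in>{1..K}-{istar}. real (T i n w))"
proof -
  have "(\<Sum>i\<in>{1..K}. real (T i n w)) = real n" using sum_T[OF assms, of n] by (metis of_nat_sum)
  then show ?thesis using istar(1) by (simp add: sum.remove)
qed

lemma others_small:
  assumes w: "w \<in> space M" and le: "\<forall>i\<in>{1..K}-{istar}. T i n w \<le> u"
  shows "real n - real (T istar n w) \<le> K * real u"
proof -
  have "real n - real (T istar n w) \<le> (\<Sum>i\<in>{1..K}-{istar}. real u)"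
    unfolding others_sum[OF w] using le by (intro sum_mono) auto
  also have "\<dots> = real (card ({1..K}-{istar})) * real u" by simp
  also have "\<dots> \<le> K * real u" by (intro mult_right_mono) (auto simp: card_Diff_singleton_if)
  finally show ?thesis .
qed

lemma common_bound:
  fixes u :: nat
  assumes n: "n \<ge> 1" and z1: "z \<ge> 1" and u1: "u \<ge> 1" and u3: "real u \<ge> h * z / (4 * L * K)"
  and h_def: "h = real n powr \<eta>q"
  shows "measure M (\<Union>i\<in>{1..K}-{istar}. Sub i u n) \<le> 2 * K * (4 * L * K) powr \<alpha> / z powr (\<alpha> - 1)"
proof -
  interpret prob_space M by (rule M)
  have LK: "4 * L * K > 0" using L_pos K by auto
  have hpos: "h > 0" unfolding h_def using n by simp
  have each: "2 * real n / real u powr \<alpha> \<le> 2 * (4 * L * K) powr \<alpha> / z powr (\<alpha> - 1)"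
  proof -
    have "(h * (z / (4 * L * K))) powr \<alpha> \<le> real u powr \<alpha>"
      using u3 hpos z1 LK \<alpha> by (intro powr_mono2) auto
    moreover have "(h * (z / (4 * L * K))) powr \<alpha> = h powr \<alpha> * (z powr \<alpha> / (4 * L * K) powr \<alpha>)"
      using hpos z1 LK by (simp add: powr_mult powr_divide)
    moreover have "h powr \<alpha> \<ge> real n" unfolding h_def using h_facts(3)[OF n] .
    moreover have "real n * (z powr \<alpha> / (4 * L * K) powr \<alpha>) \<le> h powr \<alpha> * (z powr \<alpha> / (4 * L * K) powr \<alpha>)"
      using \<open>h powr \<alpha> \<ge> real n\<close> by (intro mult_right_mono) auto
    ultimately have low: "real n * (z powr \<alpha> / (4 * L * K) powr \<alpha>) \<le> real u powr \<alpha>"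
      by linarith
    have npos: "real n * (z powr \<alpha> / (4 * L * K) powr \<alpha>) > 0" using n z1 LK K by (intro mult_pos_pos divide_pos_pos) auto
    have "2 * real n / real u powr \<alpha> \<le> 2 * real n / (real n * (z powr \<alpha> / (4 * L * K) powr \<alpha>))"
    proof (rule divide_left_mono[OF low])
      show "0 < real u powr \<alpha> * (real n * (z powr \<alpha> / (4 * L * K) powr \<alpha>))"
        by (rule mult_pos_pos) (use u1 npos in auto)
    qed simp
    also have "\<dots> = 2 * (4 * L * K) powr \<alpha> / z powr \<alpha>" using n z1 LK by (simp add: field_simps)
    also have "\<dots> \<le> 2 * (4 * L * K) powr \<alpha> / z powr (\<alpha> - 1)"
      using z1 LK by (intro divide_left_mono powr_mono) auto
    finally show ?thesis .
  qed
  have "measure M (\<Union>i\<in>{1..K}-{istar}. Sub i u n) \<le> (\<Sum>i\<in>{1..K}-{istar}. measure M (Sub i u n))"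
    using Sub_sets by (intro measure_UNION_le) auto
  also have "\<dots> \<le> (\<Sum>i\<in>{1..K}-{istar}. 2 * (4 * L * K) powr \<alpha> / z powr (\<alpha> - 1))"
    using Sub_measure[OF _ u1 n] each by (intro sum_mono) (meson DiffD1 order_trans)
  also have "\<dots> = real (card ({1..K}-{istar})) * (2 * (4 * L * K) powr \<alpha> / z powr (\<alpha> - 1))" by simp
  also have "\<dots> \<le> K * (2 * (4 * L * K) powr \<alpha> / z powr (\<alpha> - 1))"
    by (intro mult_right_mono) (auto simp: card_Diff_singleton_if)
  finally show ?thesis by (simp add: mult_ac)
qed

end


context ucbset begin

lemma half_bound: assumes "z \<ge> 2"
  shows "\<theta>L / (z / 2) powr \<xi> \<le> \<theta>L * 2 powr \<xi> / z powr (\<alpha> - 1)"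
proof -
  have "\<theta>L / (z / 2) powr \<xi> = \<theta>L * 2 powr \<xi> / z powr \<xi>" using assms by (simp add: powr_divide)
  also have "\<dots> \<le> \<theta>L * 2 powr \<xi> / z powr (\<alpha> - 1)"
    using assms \<theta>L etaq(4) by (intro divide_left_mono powr_mono mult_pos_pos) auto
  finally show ?thesis .
qed

lemma tail_big:
  assumes n: "n \<ge> 1" and z: "z \<ge> Z0"
  shows "measure M {w \<in> space M. real n * rho_stream K \<beta> \<gamma> c x Snext a n w - real n * mustar
            \<ge> real n powr \<eta>q * z} \<le> C1 / z powr (\<alpha> - 1)"
    and "measure M {w \<in> space M. real n * rho_stream K \<beta> \<gamma> c x Snext a n w - real n * mustar
            \<le> - (real n powr \<eta>q * z)} \<le> C1 / z powr (\<alpha> - 1)"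
proof -
  interpret prob_space M by (rule M)
  define h where "h = real n powr \<eta>q"
  define u where "u = nat \<lfloor>h * z / (2 * L * K)\<rfloor>"
  note uc = u_choice[OF n z, folded h_def, folded u_def]
  have z2: "z \<ge> 2" using z Z0_facts by linarith
  have z1: "z \<ge> 1" using z2 by simp
  have hn: "real n powr \<eta> \<le> h" unfolding h_def by (rule h_facts(2)[OF n])
  have LKu: "L * K * real u \<le> h * z / 2" by (rule uc(4))
  define U where "U = (\<Union>i\<in>{1..K}-{istar}. Sub i u n)"
  have U_sets: "U \<in> sets M" unfolding U_def using Sub_sets by auto
  have Um: "measure M U \<le> 2 * K * (4 * L * K) powr \<alpha> / z powr (\<alpha> - 1)"
    unfolding U_def by (rule common_bound[OF n z1 uc(1) uc(3) h_def])
  have small: "\<bar>real n * rho_stream K \<beta> \<gamma> c x Snext a n w - real n * rh istar n w\<bar> \<le> h * z / 2"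
    if w: "w \<in> space M" "w \<notin> U" for w
  proof -
    have "\<forall>i\<in>{1..K}-{istar}. T i n w \<le> u"
    proof
      fix i assume i: "i \<in> {1..K}-{istar}"
      show "T i n w \<le> u"
      proof (rule ccontr)
        assume "\<not> T i n w \<le> u"
        moreover have "real u \<ge> U0 * real n powr \<eta>q" using uc(2) unfolding h_def .
        ultimately have "w \<in> Sub i u n" using sub_incl[of i u n] i uc(1) w(1) by auto
        then show False using w(2) i unfolding U_def by blast
      qed
    qed
    then have "real n - real (T istar n w) \<le> K * real u" by (rule others_small[OF w(1)])
    then have "L * (real n - real (T istar n w)) \<le> L * (K * real u)" using L_pos by (intro mult_left_mono) auto
    then show ?thesis using compare[OF w(1) n] LKu by (simp add: mult_ac)
  qed
  have E1sets: "{w \<in> space M. real n * rh istar n w - real n * mu istar \<ge> real n powr \<eta> * (z/2)} \<in> sets M"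
    "{w \<in> space M. real n * rh istar n w - real n * mu istar \<le> - (real n powr \<eta> * (z/2))} \<in> sets M"
  proof -
    note [measurable] = rh_meas[OF istar(1)]
    show "{w \<in> space M. real n * rh istar n w - real n * mu istar \<ge> real n powr \<eta> * (z/2)} \<in> sets M" by measurable
    show "{w \<in> space M. real n * rh istar n w - real n * mu istar \<le> - (real n powr \<eta> * (z/2))} \<in> sets M" by measurable
  qed
  have E1m: "measure M {w \<in> space M. real n * rh istar n w - real n * mu istar \<ge> real n powr \<eta> * (z/2)} \<le> \<theta>L / (z / 2) powr \<xi>"
    "measure M {w \<in> space M. real n * rh istar n w - real n * mu istar \<le> - (real n powr \<eta> * (z/2))} \<le> \<theta>L / (z / 2) powr \<xi>"
    using tail_arm_up[OF istar(1) n, of "z/2"] tail_arm_lo[OF istar(1) n, of "z/2"] z2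
    unfolding rh_def mu_def by auto
  have hz: "real n powr \<eta> * (z/2) \<le> h * z / 2" using hn z1 by (simp add: mult_right_mono)
  have C1eq: "\<theta>L * 2 powr \<xi> / z powr (\<alpha> - 1) + 2 * K * (4 * L * K) powr \<alpha> / z powr (\<alpha> - 1) = C1 / z powr (\<alpha> - 1)"
    unfolding C1_def by (simp add: add_divide_distrib)
  show "measure M {w \<in> space M. real n * rho_stream K \<beta> \<gamma> c x Snext a n w - real n * mustar
            \<ge> real n powr \<eta>q * z} \<le> C1 / z powr (\<alpha> - 1)"
  proof -
    have "{w \<in> space M. real n * rho_stream K \<beta> \<gamma> c x Snext a n w - real n * mustar \<ge> real n powr \<eta>q * z}
      \<subseteq> {w \<in> space M. real n * rh istar n w - real n * mu istar \<ge> real n powr \<eta> * (z/2)} \<union> U"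
    proof
      fix w assume w: "w \<in> {w \<in> space M. real n * rho_stream K \<beta> \<gamma> c x Snext a n w - real n * mustar \<ge> real n powr \<eta>q * z}"
      show "w \<in> {w \<in> space M. real n * rh istar n w - real n * mu istar \<ge> real n powr \<eta> * (z/2)} \<union> U"
      proof (cases "w \<in> U")
        case False
        have wi: "real n * rho_stream K \<beta> \<gamma> c x Snext a n w - real n * mustar \<ge> real n powr \<eta>q * z" using w by simp
        have ws: "w \<in> space M" using w by simp
        have "real n * rh istar n w - real n * mu istar \<ge> real n powr \<eta> * (z/2)"
          using small[OF ws False] wi hz unfolding h_def abs_le_iff istar(2) by (elim conjE) linarith
        then show ?thesis using w by auto
      qed simp
    qed
    then have "measure M {w \<in> space M. real n * rho_stream K \<beta> \<gamma> c x Snext a n w - real n * mustar \<ge> real n powr \<eta>q * z}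
       \<le> measure M ({w \<in> space M. real n * rh istar n w - real n * mu istar \<ge> real n powr \<eta> * (z/2)} \<union> U)"
      by (rule finite_measure_mono) (rule sets.Un[OF E1sets(1) U_sets])
    also have "\<dots> \<le> measure M {w \<in> space M. real n * rh istar n w - real n * mu istar \<ge> real n powr \<eta> * (z/2)} + measure M U"
      by (rule measure_Un_le[OF E1sets(1) U_sets])
    also have "\<dots> \<le> C1 / z powr (\<alpha> - 1)" using E1m(1) Um half_bound[OF z2] C1eq by linarith
    finally show ?thesis .
  qed
  show "measure M {w \<in> space M. real n * rho_stream K \<beta> \<gamma> c x Snext a n w - real n * mustar
            \<le> - (real n powr \<eta>q * z)} \<le> C1 / z powr (\<alpha> - 1)"
  proof -
    have "{w \<in> space M. real n * rho_stream K \<beta> \<gamma> c x Snext a n w - real n * mustar \<le> - (real n powr \<eta>q * z)}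
      \<subseteq> {w \<in> space M. real n * rh istar n w - real n * mu istar \<le> - (real n powr \<eta> * (z/2))} \<union> U"
    proof
      fix w assume w: "w \<in> {w \<in> space M. real n * rho_stream K \<beta> \<gamma> c x Snext a n w - real n * mustar \<le> - (real n powr \<eta>q * z)}"
      show "w \<in> {w \<in> space M. real n * rh istar n w - real n * mu istar \<le> - (real n powr \<eta> * (z/2))} \<union> U"
      proof (cases "w \<in> U")
        case False
        have wi: "real n * rho_stream K \<beta> \<gamma> c x Snext a n w - real n * mustar \<le> - (real n powr \<eta>q * z)" using w by simp
        have ws: "w \<in> space M" using w by simp
        have "real n * rh istar n w - real n * mu istar \<le> - (real n powr \<eta> * (z/2))"
          using small[OF ws False] wi hz unfolding h_def abs_le_iff istar(2) by (elim conjE) linarith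
        then show ?thesis using w by auto
      qed simp
    qed
    then have "measure M {w \<in> space M. real n * rho_stream K \<beta> \<gamma> c x Snext a n w - real n * mustar \<le> - (real n powr \<eta>q * z)}
       \<le> measure M ({w \<in> space M. real n * rh istar n w - real n * mu istar \<le> - (real n powr \<eta> * (z/2))} \<union> U)"
      by (rule finite_measure_mono) (rule sets.Un[OF E1sets(2) U_sets])
    also have "\<dots> \<le> measure M {w \<in> space M. real n * rh istar n w - real n * mu istar \<le> - (real n powr \<eta> * (z/2))} + measure M U"
      by (rule measure_Un_le[OF E1sets(2) U_sets])
    also have "\<dots> \<le> C1 / z powr (\<alpha> - 1)" using E1m(2) Um half_bound[OF z2] C1eq by linarith
    finally show ?thesis .
  qed
qed

end


lemma expect_tail:
  fixes f :: "'a \<Rightarrow> real"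
  assumes M: "prob_space M" and f_meas: "f \<in> borel_measurable M" and bnd: "\<And>w. w \<in> space M \<Longrightarrow> \<bar>f w\<bar> \<le> B"
   and h: "h > 0" and p: "p > 1" and th: "\<theta>2 \<ge> 0"
   and up: "\<And>z. z \<ge> 1 \<Longrightarrow> measure M {w \<in> space M. f w \<ge> h * z} \<le> \<theta>2 / z powr p"
   and lo: "\<And>z. z \<ge> 1 \<Longrightarrow> measure M {w \<in> space M. f w \<le> - (h * z)} \<le> \<theta>2 / z powr p"
  shows "(\<integral>w. \<bar>f w\<bar> \<partial>M) \<le> h * (1 + 2 * \<theta>2 * (\<Sum>k. real k powr (- p)))"
proof -
  interpret prob_space M by (rule M)
  define N where "N = nat \<lceil>B / h\<rceil>"
  define A where "A k = {w \<in> space M. \<bar>f w\<bar> \<ge> h * real k}" for k :: nat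
  have [measurable]: "f \<in> borel_measurable M" by (rule f_meas)
  have Asets: "A k \<in> sets M" for k unfolding A_def by measurable
  have pw: "\<bar>f w\<bar> \<le> h * (1 + (\<Sum>k\<in>{1..N}. indicator (A k) w))" if w: "w \<in> space M" for w
  proof -
    define j where "j = nat \<lfloor>\<bar>f w\<bar> / h\<rfloor>"
    have fh: "\<bar>f w\<bar> / h \<ge> 0" using h by simp
    have j1: "real j \<le> \<bar>f w\<bar> / h" "\<bar>f w\<bar> / h < real j + 1" unfolding j_def using fh by linarith+
    have "\<bar>f w\<bar> / h \<le> B / h" using bnd[OF w] h by (simp add: divide_right_mono)
    then have jN: "j \<le> N" unfolding j_def N_def by (metis ceiling_le_iff floor_le_ceiling le_nat_iff nat_mono order.trans le_floor_iff floor_mono)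
    have "real j = (\<Sum>k\<in>{1..j}. indicator (A k) w :: real)"
    proof -
      have "(\<Sum>k\<in>{1..j}. indicator (A k) w :: real) = (\<Sum>k\<in>{1..j}. 1)"
      proof (rule sum.cong)
        fix k assume k: "k \<in> {1..j}"
        have "h * real k \<le> h * real j" using k h by (intro mult_left_mono) auto
        also have "\<dots> \<le> \<bar>f w\<bar>" using j1(1) h by (simp add: field_simps)
        finally show "indicator (A k) w = (1::real)" unfolding A_def using w by (simp add: indicator_def)
      qed simp
      then show ?thesis by simp
    qed
    also have "\<dots> \<le> (\<Sum>k\<in>{1..N}. indicator (A k) w)" using jN by (intro sum_mono2) auto
    finally have "real j \<le> (\<Sum>k\<in>{1..N}. indicator (A k) w)" .
    moreover have "\<bar>f w\<bar> \<le> h * (real j + 1)" using j1(2) h by (simp add: field_simps)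
    ultimately show ?thesis using h by (smt (verit) mult_left_mono)
  qed
  have fint: "integrable M (\<lambda>w. \<bar>f w\<bar>)"
    by (rule integrable_const_bound[where B=B]) (use bnd in auto)
  have indint: "integrable M (\<lambda>w. h * (1 + (\<Sum>k\<in>{1..N}. indicator (A k) w)))"
    using Asets by (intro integrable_mult_right integrable_add integrable_sum integrable_real_indicator integrable_const) (auto simp: less_top[symmetric])
  have "(\<integral>w. \<bar>f w\<bar> \<partial>M) \<le> (\<integral>w. h * (1 + (\<Sum>k\<in>{1..N}. indicator (A k) w)) \<partial>M)"
    using pw by (intro integral_mono fint indint) auto
  also have "\<dots> = h * (1 + (\<Sum>k\<in>{1..N}. measure M (A k)))"
    using Asets by (simp add: integral_add integral_sum integrable_real_indicator integrable_sum prob_space less_top[symmetric])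
  also have "\<dots> \<le> h * (1 + (\<Sum>k\<in>{1..N}. 2 * \<theta>2 * real k powr (- p)))"
  proof -
    have "measure M (A k) \<le> 2 * \<theta>2 * real k powr (- p)" if k: "k \<in> {1..N}" for k
    proof -
      have k1: "real k \<ge> 1" using k by simp
      have s1: "{w \<in> space M. f w \<ge> h * real k} \<in> sets M" "{w \<in> space M. f w \<le> - (h * real k)} \<in> sets M"
        by measurable
      have "A k \<subseteq> {w \<in> space M. f w \<ge> h * real k} \<union> {w \<in> space M. f w \<le> - (h * real k)}"
        unfolding A_def by auto
      then have "measure M (A k) \<le> measure M ({w \<in> space M. f w \<ge> h * real k} \<union> {w \<in> space M. f w \<le> - (h * real k)})"
        by (rule finite_measure_mono) (rule sets.Un[OF s1])
      also have "\<dots> \<le> measure M {w \<in> space M. f w \<ge> h * real k} + measure M {w \<in> space M. f w \<le> - (h * real k)}"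
        by (rule measure_Un_le[OF s1])
      also have "\<dots> \<le> \<theta>2 / real k powr p + \<theta>2 / real k powr p" using up[OF k1] lo[OF k1] by linarith
      also have "\<dots> = 2 * \<theta>2 * real k powr (- p)" using k1 by (simp add: powr_minus divide_inverse)
      finally show ?thesis .
    qed
    then show ?thesis using h by (intro mult_left_mono add_left_mono sum_mono) auto
  qed
  also have "\<dots> \<le> h * (1 + 2 * \<theta>2 * (\<Sum>k. real k powr (- p)))"
  proof -
    have sm: "summable (\<lambda>k. real k powr (- p))" using p by (subst summable_real_powr_iff) simp
    have "(\<Sum>k\<in>{1..N}. real k powr (- p)) \<le> (\<Sum>k. real k powr (- p))"
      by (rule sum_le_suminf[OF sm]) auto
    then have "(\<Sum>k\<in>{1..N}. 2 * \<theta>2 * real k powr (- p)) \<le> 2 * \<theta>2 * (\<Sum>k. real k powr (- p))"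
      using th by (simp add: sum_distrib_left[symmetric] mult_left_mono)
    then show ?thesis using h by (intro mult_left_mono add_left_mono) auto
  qed
  finally show ?thesis .
qed


context ucbset begin

definition "th2 = C1 + Z0 powr (\<alpha> - 1) + 1"
definition "Ssum = (\<Sum>k. real k powr (- (\<alpha> - 1)))"

lemma C1_nonneg: "C1 \<ge> 0" unfolding C1_def using \<theta>L K by (intro add_nonneg_nonneg mult_nonneg_nonneg) auto

lemma th2: "th2 > 1" "C1 \<le> th2" "Z0 powr (\<alpha> - 1) < th2"
proof -
  have "Z0 \<noteq> 0" using Z0_facts by auto
  then have zp: "Z0 powr (\<alpha> - 1) > 0" by simp
  then show "th2 > 1" "C1 \<le> th2" "Z0 powr (\<alpha> - 1) < th2" unfolding th2_def using C1_nonneg zp by linarith+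
qed

lemma tail_all:
  assumes n: "n \<ge> 1" and z: "z \<ge> 1"
  shows "measure M {w \<in> space M. real n * rho_stream K \<beta> \<gamma> c x Snext a n w - real n * mustar
            \<ge> real n powr \<eta>q * z} \<le> th2 / z powr (\<alpha> - 1)"
    and "measure M {w \<in> space M. real n * rho_stream K \<beta> \<gamma> c x Snext a n w - real n * mustar
            \<le> - (real n powr \<eta>q * z)} \<le> th2 / z powr (\<alpha> - 1)"
proof -
  interpret prob_space M by (rule M)
  have zp: "z powr (\<alpha> - 1) > 0" using z by simp
  have bnd: "measure M S \<le> th2 / z powr (\<alpha> - 1)" if
    big: "z \<ge> Z0 \<Longrightarrow> measure M S \<le> C1 / z powr (\<alpha> - 1)" for S
  proof (cases "z \<ge> Z0")
    case True
    then show ?thesis using big th2(2) zp by (meson divide_right_mono less_imp_le order_trans)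
  next
    case False
    have "z powr (\<alpha> - 1) \<le> Z0 powr (\<alpha> - 1)" using False z \<alpha> by (intro powr_mono2) auto
    then have "z powr (\<alpha> - 1) \<le> th2" using th2(3) by linarith
    then have "1 \<le> th2 / z powr (\<alpha> - 1)" using zp by simp
    then show ?thesis using prob_le_1[of S] by linarith
  qed
  show "measure M {w \<in> space M. real n * rho_stream K \<beta> \<gamma> c x Snext a n w - real n * mustar
            \<ge> real n powr \<eta>q * z} \<le> th2 / z powr (\<alpha> - 1)"
    by (rule bnd) (rule tail_big(1)[OF n])
  show "measure M {w \<in> space M. real n * rho_stream K \<beta> \<gamma> c x Snext a n w - real n * mustar
            \<le> - (real n powr \<eta>q * z)} \<le> th2 / z powr (\<alpha> - 1)"
    by (rule bnd) (rule tail_big(2)[OF n])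
qed

lemma stream_bd: assumes w: "w \<in> space M" and n: "n \<ge> 1"
  shows "\<bar>rho_stream K \<beta> \<gamma> c x Snext a n w\<bar> \<le> R"
proof -
  define G where "G = (\<Sum>i=1..K. Sarm i (T i n w) w)"
  have sumT: "(\<Sum>i\<in>{1..K}. real (T i n w)) = real n" using sum_T[OF w, of n] by (metis of_nat_sum)
  have "real n * exp (- (\<beta> * R)) = (\<Sum>i=1..K. real (T i n w) * exp (- (\<beta> * R)))"
    using sumT by (simp add: sum_distrib_right[symmetric])
  also have "\<dots> \<le> G" unfolding G_def using Sarm_bd(1)[OF _ w] by (intro sum_mono) auto
  finally have G1: "real n * exp (- (\<beta> * R)) \<le> G" .
  have "G \<le> (\<Sum>i=1..K. real (T i n w) * exp (\<beta> * R))" unfolding G_def using Sarm_bd(2)[OF _ w] by (intro sum_mono) auto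
  also have "\<dots> = real n * exp (\<beta> * R)" using sumT by (simp add: sum_distrib_right[symmetric])
  finally have G2: "G \<le> real n * exp (\<beta> * R)" .
  have np: "real n > 0" using n by simp
  have q1: "exp (- (\<beta> * R)) \<le> 1 / real n * G" using G1 np by (simp add: field_simps)
  have q2: "1 / real n * G \<le> exp (\<beta> * R)" using G2 np by (simp add: field_simps)
  have qpos: "1 / real n * G > 0" using q1 by (meson exp_gt_zero less_le_trans)
  have "ln (exp (- (\<beta> * R))) \<le> ln (1 / real n * G)" using q1 qpos by (subst ln_le_cancel_iff) auto
  moreover have "ln (1 / real n * G) \<le> ln (exp (\<beta> * R))" using q2 qpos by (subst ln_le_cancel_iff) auto
  ultimately have "\<bar>ln (1 / real n * G)\<bar> \<le> \<beta> * R" by simp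
  then have "\<bar>1 / \<beta> * ln (1 / real n * G)\<bar> \<le> R" using \<beta> by (simp add: abs_mult field_simps)
  then show ?thesis unfolding stream_eq G_def .
qed

lemma expect_bound: assumes n: "n \<ge> 1"
  shows "\<bar>mustar - integral\<^sup>L M (rho_stream K \<beta> \<gamma> c x Snext a n)\<bar> \<le> real n powr (\<eta>q - 1) * (1 + 2 * th2 * Ssum)"
proof -
  interpret prob_space M by (rule M)
  define f where "f w = real n * rho_stream K \<beta> \<gamma> c x Snext a n w - real n * mustar" for w
  define h where "h = real n powr \<eta>q"
  have np: "real n > 0" using n by simp
  have hpos: "h > 0" unfolding h_def using np by simp
  note [measurable] = stream_meas[of n]
  have fm: "f \<in> borel_measurable M" unfolding f_def by measurable
  have fb: "\<bar>f w\<bar> \<le> real n * (R + \<bar>mustar\<bar>)" if w: "w \<in> space M" for w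
  proof -
    have "\<bar>f w\<bar> \<le> real n * \<bar>rho_stream K \<beta> \<gamma> c x Snext a n w\<bar> + real n * \<bar>mustar\<bar>"
      unfolding f_def using np by (simp add: abs_mult abs_triangle_ineq4[THEN order_trans] ) 
    also have "\<dots> \<le> real n * R + real n * \<bar>mustar\<bar>" using stream_bd[OF w n] np by simp
    finally show ?thesis by (simp add: distrib_left)
  qed
  have tail: "(\<integral>w. \<bar>f w\<bar> \<partial>M) \<le> h * (1 + 2 * th2 * Ssum)"
    unfolding Ssum_def
  proof (rule expect_tail[OF M fm fb hpos])
    show "\<alpha> - 1 > 1" using \<alpha> by simp
    show "th2 \<ge> 0" using th2 by simp
    fix z :: real assume z: "z \<ge> 1"
    show "measure M {w \<in> space M. f w \<ge> h * z} \<le> th2 / z powr (\<alpha> - 1)"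
      unfolding f_def h_def by (rule tail_all(1)[OF n z])
    show "measure M {w \<in> space M. f w \<le> - (h * z)} \<le> th2 / z powr (\<alpha> - 1)"
      unfolding f_def h_def by (rule tail_all(2)[OF n z])
  qed
  have rint: "integrable M (rho_stream K \<beta> \<gamma> c x Snext a n)"
    by (rule integrable_const_bound[where B=R]) (use stream_bd[OF _ n] in auto)
  have "integral\<^sup>L M f = real n * integral\<^sup>L M (rho_stream K \<beta> \<gamma> c x Snext a n) - real n * mustar"
    unfolding f_def using rint by (simp add: prob_space)
  then have "real n * \<bar>integral\<^sup>L M (rho_stream K \<beta> \<gamma> c x Snext a n) - mustar\<bar> = \<bar>integral\<^sup>L M f\<bar>"
  proof -
    have "\<bar>integral\<^sup>L M f\<bar> = \<bar>real n * (integral\<^sup>L M (rho_stream K \<beta> \<gamma> c x Snext a n) - mustar)\<bar>"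
      unfolding \<open>integral\<^sup>L M f = _\<close> by (simp add: right_diff_distrib)
    also have "\<dots> = real n * \<bar>integral\<^sup>L M (rho_stream K \<beta> \<gamma> c x Snext a n) - mustar\<bar>"
      by (simp add: abs_mult)
    finally show ?thesis by simp
  qed
  also have "\<dots> \<le> (\<integral>w. \<bar>f w\<bar> \<partial>M)" by (rule integral_abs_bound)
  also have "\<dots> \<le> h * (1 + 2 * th2 * Ssum)" by (rule tail)
  finally have "\<bar>integral\<^sup>L M (rho_stream K \<beta> \<gamma> c x Snext a n) - mustar\<bar> \<le> h / real n * (1 + 2 * th2 * Ssum)"
    using np by (simp add: field_simps)
  moreover have "h / real n = real n powr (\<eta>q - 1)" unfolding h_def using np by (simp add: powr_diff)
  ultimately show ?thesis by (simp add: abs_minus_commute)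
qed

end


theorem theorem5:
  fixes M :: "'w measure"
    and K :: nat and \<beta> \<gamma> Rc Rx :: real
    and c :: "nat \<Rightarrow> real"
    and P :: "nat \<Rightarrow> 's::finite pmf"
    and Snext :: "nat \<Rightarrow> nat \<Rightarrow> 'w \<Rightarrow> 's"
    and x :: "nat \<Rightarrow> 's \<Rightarrow> nat \<Rightarrow> 'w \<Rightarrow> real"
    and mus :: "nat \<Rightarrow> 's \<Rightarrow> real"
    and \<theta> \<xi> \<eta> \<alpha> \<theta>L :: real
    and a :: "nat \<Rightarrow> 'w \<Rightarrow> nat"
  assumes M: "prob_space M"
    and K: "K \<ge> 1"
    and \<beta>: "\<beta> > 0" and \<gamma>: "0 < \<gamma>" "\<gamma> \<le> 1"
    and c_bd: "\<And>i. i \<in> {1..K} \<Longrightarrow> \<bar>c i\<bar> \<le> Rc"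
    and x_meas: "\<And>i s t. i \<in> {1..K} \<Longrightarrow> x i s t \<in> borel_measurable M"
    and x_bd: "\<And>i s t w. i \<in> {1..K} \<Longrightarrow> t \<ge> 1 \<Longrightarrow> w \<in> space M \<Longrightarrow> \<bar>x i s t w\<bar> \<le> Rx"
    and S_meas: "\<And>i k. i \<in> {1..K} \<Longrightarrow> k \<ge> 1 \<Longrightarrow> Snext i k \<in> measurable M (count_space UNIV)"
    and S_distr: "\<And>i k. i \<in> {1..K} \<Longrightarrow> k \<ge> 1 \<Longrightarrow>
                    distr M (count_space UNIV) (Snext i k) = measure_pmf (P i)"
    and S_indep: "prob_space.indep_vars M (\<lambda>_. count_space UNIV) (\<lambda>(i, k). Snext i k)
                    ({1..K} \<times> {1..})"
    and mus_lim: "\<And>i s. i \<in> {1..K} \<Longrightarrow>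
                    (\<lambda>n. integral\<^sup>L M (rho_hat_state \<beta> \<gamma> x i s n)) \<longlonglongrightarrow> mus i s"
    and \<theta>: "\<theta> > 1" and \<xi>: "\<xi> > 1" and \<eta>: "1/2 \<le> \<eta>" "\<eta> < 1"
    and \<alpha>: "\<alpha> > 2" "\<xi> * \<eta> * (1 - \<eta>) \<le> \<alpha>" "\<alpha> < \<xi> * (1 - \<eta>)"
    and tail_state_up: "\<And>i s n z. i \<in> {1..K} \<Longrightarrow> n \<ge> 1 \<Longrightarrow> z \<ge> 1 \<Longrightarrow>
          measure M {w \<in> space M. real n * rho_hat_state \<beta> \<gamma> x i s n w - real n * mus i s
                                    \<ge> real n powr \<eta> * z} \<le> \<theta> / z powr \<xi>"
    and tail_state_lo: "\<And>i s n z. i \<in> {1..K} \<Longrightarrow> n \<ge> 1 \<Longrightarrow> z \<ge> 1 \<Longrightarrow>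
          measure M {w \<in> space M. real n * rho_hat_state \<beta> \<gamma> x i s n w - real n * mus i s
                                    \<le> - (real n powr \<eta> * z)} \<le> \<theta> / z powr \<xi>"
    and \<theta>L: "\<theta>L > 1"
    and tail_arm_up: "\<And>i n z. i \<in> {1..K} \<Longrightarrow> n \<ge> 1 \<Longrightarrow> z \<ge> 1 \<Longrightarrow>
          measure M {w \<in> space M. real n * rho_hat_arm \<beta> \<gamma> c x Snext i n w
                                    - real n * mu_arm \<beta> \<gamma> c P mus i
                                    \<ge> real n powr \<eta> * z} \<le> \<theta>L / z powr \<xi>"
    and tail_arm_lo: "\<And>i n z. i \<in> {1..K} \<Longrightarrow> n \<ge> 1 \<Longrightarrow> z \<ge> 1 \<Longrightarrow>
          measure M {w \<in> space M. real n * rho_hat_arm \<beta> \<gamma> c x Snext i n w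
                                    - real n * mu_arm \<beta> \<gamma> c P mus i
                                    \<le> - (real n powr \<eta> * z)} \<le> \<theta>L / z powr \<xi>"
    and unique_opt: "\<exists>!i. i \<in> {1..K} \<and>
                       mu_arm \<beta> \<gamma> c P mus i = Min (mu_arm \<beta> \<gamma> c P mus ` {1..K})"
    and a_meas: "\<And>t. a t \<in> measurable M (count_space UNIV)"
    and run: "ucb_run K \<beta> \<gamma> c x Snext \<theta>L \<xi> \<alpha> \<eta> (space M) a"
  shows "\<exists>\<theta>''>1.
     (\<forall>n\<ge>1. \<forall>z\<ge>1.
        measure M {w \<in> space M.
            real n * rho_stream K \<beta> \<gamma> c x Snext a n w
              - real n * Min (mu_arm \<beta> \<gamma> c P mus ` {1..K})
            \<ge> real n powr (\<alpha> / (\<xi> * (1 - \<eta>))) * z} \<le> \<theta>'' / z powr (\<alpha> - 1)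
      \<and> measure M {w \<in> space M.
            real n * rho_stream K \<beta> \<gamma> c x Snext a n w
              - real n * Min (mu_arm \<beta> \<gamma> c P mus ` {1..K})
            \<le> - (real n powr (\<alpha> / (\<xi> * (1 - \<eta>))) * z)} \<le> \<theta>'' / z powr (\<alpha> - 1))
     \<and> (\<lambda>n. \<bar>Min (mu_arm \<beta> \<gamma> c P mus ` {1..K})
              - integral\<^sup>L M (rho_stream K \<beta> \<gamma> c x Snext a n)\<bar>)
         \<in> O(\<lambda>n. \<theta>'' * real n powr (\<alpha> / (\<xi> * (1 - \<eta>)) - 1))
     \<and> (\<lambda>n. integral\<^sup>L M (rho_stream K \<beta> \<gamma> c x Snext a n))
         \<longlonglongrightarrow> Min (mu_arm \<beta> \<gamma> c P mus ` {1..K})"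
proof -
  interpret u: ucbset M K \<beta> \<gamma> Rc Rx c P Snext x mus \<theta> \<xi> \<eta> \<alpha> \<theta>L a
    by (rule ucbset.intro) (fact M K \<beta> \<gamma> c_bd x_meas x_bd S_meas \<xi> \<eta> \<alpha> \<theta>L tail_arm_up tail_arm_lo unique_opt a_meas run)+
  have mueq: "u.mu = mu_arm \<beta> \<gamma> c P mus" by (rule ext) (simp add: u.mu_def)
  have mst: "Min (mu_arm \<beta> \<gamma> c P mus ` {1..K}) = u.mustar" unfolding u.mustar_def mueq ..
  have eq: "\<alpha> / (\<xi> * (1 - \<eta>)) = u.\<eta>q" unfolding u.\<eta>q_def ..
  have S0: "u.Ssum \<ge> 0" unfolding u.Ssum_def
  proof (rule suminf_nonneg)
    show "summable (\<lambda>k. real k powr (- (\<alpha> - 1)))" using \<alpha> by (subst summable_real_powr_iff) simp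
  qed simp
  define Cst where "Cst = 1 + 2 * u.th2 * u.Ssum"
  have Cst: "Cst > 0" unfolding Cst_def using S0 u.th2 by (simp add: add_pos_nonneg)
  have bound: "\<forall>\<^sub>F n in sequentially. \<bar>u.mustar - integral\<^sup>L M (rho_stream K \<beta> \<gamma> c x Snext a n)\<bar> \<le> real n powr (u.\<eta>q - 1) * Cst"
    using eventually_ge_at_top[of 1] unfolding Cst_def by eventually_elim (rule u.expect_bound)
  show ?thesis unfolding mst eq
  proof (intro exI[of _ u.th2] conjI allI impI)
    show "u.th2 > 1" by (rule u.th2)
    fix n :: nat and z :: real assume "n \<ge> 1" "z \<ge> 1"
    then show "measure M {w \<in> space M. real n * rho_stream K \<beta> \<gamma> c x Snext a n w - real n * u.mustar
            \<ge> real n powr u.\<eta>q * z} \<le> u.th2 / z powr (\<alpha> - 1)"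
      "measure M {w \<in> space M. real n * rho_stream K \<beta> \<gamma> c x Snext a n w - real n * u.mustar
            \<le> - (real n powr u.\<eta>q * z)} \<le> u.th2 / z powr (\<alpha> - 1)"
      by (rule u.tail_all(1), rule u.tail_all(2))
  next
    show "(\<lambda>n. \<bar>u.mustar - integral\<^sup>L M (rho_stream K \<beta> \<gamma> c x Snext a n)\<bar>)
         \<in> O(\<lambda>n. u.th2 * real n powr (u.\<eta>q - 1))"
    proof (rule bigoI[where c = "Cst / u.th2"])
      show "\<forall>\<^sub>F n in sequentially. norm \<bar>u.mustar - integral\<^sup>L M (rho_stream K \<beta> \<gamma> c x Snext a n)\<bar>
              \<le> Cst / u.th2 * norm (u.th2 * real n powr (u.\<eta>q - 1))"
        using bound
      proof eventually_elim
        case (elim n)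
        have "Cst / u.th2 * norm (u.th2 * real n powr (u.\<eta>q - 1)) = real n powr (u.\<eta>q - 1) * Cst"
          using u.th2(1) by (simp add: abs_mult)
        then show ?case using elim by simp
      qed
    qed
  next
    have "(\<lambda>n. real n powr (u.\<eta>q - 1) * Cst) \<longlonglongrightarrow> 0 * Cst"
      using u.etaq(2) by (intro tendsto_mult_right tendsto_neg_powr filterlim_real_sequentially) auto
    then have lim0: "(\<lambda>n. real n powr (u.\<eta>q - 1) * Cst) \<longlonglongrightarrow> 0" by simp
    have ev: "\<forall>\<^sub>F n in sequentially. norm (integral\<^sup>L M (rho_stream K \<beta> \<gamma> c x Snext a n) - u.mustar) \<le> real n powr (u.\<eta>q - 1) * Cst"
      using bound
    proof eventually_elim
      case (elim n)
      then show ?case by (simp add: abs_minus_commute)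
    qed
    have "(\<lambda>n. integral\<^sup>L M (rho_stream K \<beta> \<gamma> c x Snext a n) - u.mustar) \<longlonglongrightarrow> 0"
      by (rule Lim_null_comparison[OF ev lim0])
    then show "(\<lambda>n. integral\<^sup>L M (rho_stream K \<beta> \<gamma> c x Snext a n)) \<longlonglongrightarrow> u.mustar"
      by (rule LIM_zero_cancel)
  qed
qed

end
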